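(* Let $\Phi\in\mathbb{R}^{|\mathcal S|\times d}$ be a feature matrix, $H\ge1$, $\theta_0\in\mathbb{R}^d$, and deterministic stepsizes $\gamma_k\in(0,1]$ with $\sum_k\gamma_k=\infty$, $\sum_k\gamma_k^2<\infty$. Consider iterates: for $k\ge0$, let $\mu_{k+1}$ satisfy $T_{\mu_{k+1}}T^{H-1}\Phi\theta_k=T^H\Phi\theta_k$, let $\theta^{\mu_{k+1}}\in\mathbb{R}^d$ be a random vector (an estimate obtained from a trajectory of $\mu_{k+1}$), and set $\theta_{k+1}=(1-\gamma_k)\theta_k+\gamma_k\theta^{\mu_{k+1}}$. Let $\mathcal F_k$ be the filtration of the history up to iteration $k$ (so $\theta_k$ and $\mu_{k+1}$ are $\mathcal F_k$-measurable), and assume $\|\Phi\theta^{\mu_{k+1}}\|_\infty$ is bounded almost surely by a constant independent of $k$. Suppose there are constants $\delta_{app}>0$ and $\kappa>0$ with $$\beta:=\alpha^{H-1}+\kappa\frac{2\alpha^{H-1}}{1-\alpha}<1$$ and, for all $k$, almost surely, $$\big\|E[\Phi\theta^{\mu_{k+1}}\mid\mathcal F_k]-T^{H-1}\Phi\theta_k\big\|_\infty\le\kappa\big\|T^{H-1}\Phi\theta_k-J^{\mu_{k+1}}\big\|_\infty+\delta_{app}.$$ Then almost surely $$\limsup_{k\to\infty}\|\Phi\theta_k-J^*\|_\infty\le\frac{\delta_{app}}{1-\beta},\qquad \limsup_{k\to\infty}\|J^{\mu_k}-J^*\|_\infty\le\frac{2\alpha^{H-1}}{1-\alpha}\cdo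t\frac{\delta_{app}}{1-\beta}.$$
   Context: Finite Markov decision process with finite state space $\mathcal S$, finite action set $\mathcal A$, transition probabilities $P_{ij}(u)$, costs $g(i,u)\in[0,1]$, discount $\alpha\in(0,1)$. For a policy $\mu$, $T_\mu J=g_\mu+\alpha P_\mu J$ and $J^\mu$ is its fixed point; $(TJ)(i)=\min_u\big[g(i,u)+\alpha\sum_jP_{ij}(u)J(j)\big]$ with fixed point $J^*$. Powers denote compositions. The rows of $\Phi$ are feature vectors $\phi(i)^\top$, $i\in\mathcal S$. *)

theory Defs
  imports "HOL-Probability.Probability"
begin

text \<open>States: finite type 's; actions: finite type 'a
  (every action admissible in every state).\<close>

definition Tmu :: "('a \<Rightarrow> 's::finite \<Rightarrow> 's \<Rightarrow> real) \<Rightarrow> ('s \<Rightarrow> 'a \<Rightarrow> real) \<Rightarrow> real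
    \<Rightarrow> ('s \<Rightarrow> 'a) \<Rightarrow> ('s \<Rightarrow> real) \<Rightarrow> ('s \<Rightarrow> real)" where
  "Tmu P g \<alpha> \<mu> J = (\<lambda>i. g i (\<mu> i) + \<alpha> * (\<Sum>j\<in>UNIV. P (\<mu> i) i j * J j))"

definition Tbell :: "('a::finite \<Rightarrow> 's::finite \<Rightarrow> 's \<Rightarrow> real) \<Rightarrow> ('s \<Rightarrow> 'a \<Rightarrow> real) \<Rightarrow> real
    \<Rightarrow> ('s \<Rightarrow> real) \<Rightarrow> ('s \<Rightarrow> real)" where
  "Tbell P g \<alpha> J = (\<lambda>i. Min (range (\<lambda>u. g i u + \<alpha> * (\<Sum>j\<in>UNIV. P u i j * J j))))"

definition Jpol :: "('a \<Rightarrow> 's::finite \<Rightarrow> 's \<Rightarrow> real) \<Rightarrow> ('s \<Rightarrow> 'a \<Rightarrow> real) \<Rightarrow> real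
    \<Rightarrow> ('s \<Rightarrow> 'a) \<Rightarrow> ('s \<Rightarrow> real)" where
  "Jpol P g \<alpha> \<mu> = (THE J. Tmu P g \<alpha> \<mu> J = J)"

definition Jstar :: "('a::finite \<Rightarrow> 's::finite \<Rightarrow> 's \<Rightarrow> real) \<Rightarrow> ('s \<Rightarrow> 'a \<Rightarrow> real) \<Rightarrow> real
    \<Rightarrow> ('s \<Rightarrow> real)" where
  "Jstar P g \<alpha> = (THE J. Tbell P g \<alpha> J = J)"

definition norm_inf :: "('s::finite \<Rightarrow> real) \<Rightarrow> real" where
  "norm_inf J = Max (range (\<lambda>i. \<bar>J i\<bar>))"

text \<open>Feature matrix: row i is the feature vector phi i; (Phi theta)(i) = phi(i)^T theta.\<close>
definition featmul :: "('s \<Rightarrow> real ^ 'd) \<Rightarrow> real ^ 'd \<Rightarrow> ('s \<Rightarrow> real)" where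
  "featmul \<phi> \<theta> = (\<lambda>i. \<phi> i \<bullet> \<theta>)"

end

theory Submission
  imports Defs "HOL-Probability.Probability"
begin


lemma ninf_ge: "\<bar>J i\<bar> \<le> norm_inf (J::'s::finite \<Rightarrow> real)"
  unfolding norm_inf_def by (rule Max_ge) auto

lemma ninf_le: "(\<And>i. \<bar>J i\<bar> \<le> c) \<Longrightarrow> norm_inf (J::'s::finite \<Rightarrow> real) \<le> c"
  unfolding norm_inf_def by (subst Max_le_iff) auto

lemma ninf_nonneg: "0 \<le> norm_inf (J::'s::finite \<Rightarrow> real)"
  using ninf_ge[of J] abs_ge_zero order_trans by blast

lemma ninf_triangle: "norm_inf (\<lambda>i. (x::'s::finite \<Rightarrow> real) i - z i) \<le> norm_inf (\<lambda>i. x i - y i) + norm_inf (\<lambda>i. y i - z i)"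
proof (rule ninf_le)
  fix i
  have "\<bar>x i - z i\<bar> \<le> \<bar>x i - y i\<bar> + \<bar>y i - z i\<bar>" by simp
  also have "\<dots> \<le> norm_inf (\<lambda>i. x i - y i) + norm_inf (\<lambda>i. y i - z i)"
    using ninf_ge[of "\<lambda>i. x i - y i" i] ninf_ge[of "\<lambda>i. y i - z i" i] by simp
  finally show "\<bar>x i - z i\<bar> \<le> \<dots>" .
qed

lemma ninf_sym: "norm_inf (\<lambda>i. (x::'s::finite \<Rightarrow> real) i - y i) = norm_inf (\<lambda>i. y i - x i)"
  unfolding norm_inf_def by (simp add: abs_minus_commute)

lemma ninf_zero: "norm_inf (\<lambda>i. (x::'s::finite \<Rightarrow> real) i - y i) = 0 \<Longrightarrow> x = y"
proof
  fix i assume "norm_inf (\<lambda>i. x i - y i) = 0"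
  then have "\<bar>x i - y i\<bar> \<le> 0" using ninf_ge[of "\<lambda>i. x i - y i" i] by simp
  then show "x i = y i" by simp
qed

lemma Pavg:
  assumes P_nonneg: "\<And>a b c. P a b c \<ge> 0" and P_stoch: "\<And>a b. (\<Sum>j\<in>UNIV. P a b j) = 1"
  shows "\<bar>(\<Sum>j\<in>UNIV. P u i j * (x::'s::finite \<Rightarrow> real) j) - (\<Sum>j\<in>UNIV. P u i j * y j)\<bar> \<le> norm_inf (\<lambda>j. x j - y j)"
proof -
  have "\<bar>(\<Sum>j\<in>UNIV. P u i j * x j) - (\<Sum>j\<in>UNIV. P u i j * y j)\<bar> = \<bar>\<Sum>j\<in>UNIV. P u i j * (x j - y j)\<bar>"
    by (simp add: sum_subtractf right_diff_distrib)
  also have "\<dots> \<le> (\<Sum>j\<in>UNIV. \<bar>P u i j * (x j - y j)\<bar>)" by (rule sum_abs)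
  also have "\<dots> \<le> (\<Sum>j\<in>UNIV. P u i j * norm_inf (\<lambda>j. x j - y j))"
    by (rule sum_mono) (simp add: abs_mult P_nonneg mult_left_mono ninf_ge[of "\<lambda>j. x j - y j"])
  also have "\<dots> = norm_inf (\<lambda>j. x j - y j)" by (simp add: sum_distrib_right[symmetric] P_stoch)
  finally show ?thesis .
qed

lemma Min_range_diff:
  fixes f h :: "'a::finite \<Rightarrow> real"
  assumes "\<And>u. \<bar>f u - h u\<bar> \<le> c"
  shows "\<bar>Min (range f) - Min (range h)\<bar> \<le> c"
proof -
  have "Min (range f) \<in> range f" by (rule Min_in) auto
  then obtain u where u: "f u = Min (range f)" by (metis imageE)
  have "Min (range h) \<in> range h" by (rule Min_in) auto
  then obtain v where v: "h v = Min (range h)" by (metis imageE)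
  have "Min (range f) \<le> f v" by simp
  moreover have "Min (range h) \<le> h u" by simp
  ultimately show ?thesis using assms[of u] assms[of v] u v by linarith
qed

lemma Tbell_contr:
  assumes P_nonneg: "\<And>u i j. P u i j \<ge> 0" and P_stoch: "\<And>u i. (\<Sum>j\<in>UNIV. P u i j) = 1" and a: "0 \<le> \<alpha>"
  shows "norm_inf (\<lambda>i. Tbell P g \<alpha> x i - Tbell P g \<alpha> y i) \<le> \<alpha> * norm_inf (\<lambda>i. x i - y i)"
proof (rule ninf_le)
  fix i
  show "\<bar>Tbell P g \<alpha> x i - Tbell P g \<alpha> y i\<bar> \<le> \<alpha> * norm_inf (\<lambda>i. x i - y i)"
    unfolding Tbell_def
  proof (rule Min_range_diff)
    fix u
    have "\<bar>\<alpha> * ((\<Sum>j\<in>UNIV. P u i j * x j) - (\<Sum>j\<in>UNIV. P u i j * y j))\<bar> \<le> \<alpha> * norm_inf (\<lambda>i. x i - y i)"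
    proof -
      have "\<bar>(\<Sum>j\<in>UNIV. P u i j * x j) - (\<Sum>j\<in>UNIV. P u i j * y j)\<bar> \<le> norm_inf (\<lambda>i. x i - y i)"
        by (rule Pavg[OF P_nonneg P_stoch])
      then show ?thesis using a by (simp add: abs_mult mult_left_mono)
    qed
    then show "\<bar>g i u + \<alpha> * (\<Sum>j\<in>UNIV. P u i j * x j) - (g i u + \<alpha> * (\<Sum>j\<in>UNIV. P u i j * y j))\<bar> \<le> \<alpha> * norm_inf (\<lambda>i. x i - y i)"
      by (simp add: right_diff_distrib)
  qed
qed

lemma Tmu_contr:
  assumes P_nonneg: "\<And>u i j. P u i j \<ge> 0" and P_stoch: "\<And>u i. (\<Sum>j\<in>UNIV. P u i j) = 1" and a: "0 \<le> \<alpha>"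
  shows "norm_inf (\<lambda>i. Tmu P g \<alpha> \<mu> x i - Tmu P g \<alpha> \<mu> y i) \<le> \<alpha> * norm_inf (\<lambda>i. x i - y i)"
proof (rule ninf_le)
  fix i
  have "\<bar>\<alpha> * ((\<Sum>j\<in>UNIV. P (\<mu> i) i j * x j) - (\<Sum>j\<in>UNIV. P (\<mu> i) i j * y j))\<bar> \<le> \<alpha> * norm_inf (\<lambda>i. x i - y i)"
  proof -
    have "\<bar>(\<Sum>j\<in>UNIV. P (\<mu> i) i j * x j) - (\<Sum>j\<in>UNIV. P (\<mu> i) i j * y j)\<bar> \<le> norm_inf (\<lambda>i. x i - y i)"
      by (rule Pavg[OF P_nonneg P_stoch])
    then show ?thesis using a by (simp add: abs_mult mult_left_mono)
  qed
  then show "\<bar>Tmu P g \<alpha> \<mu> x i - Tmu P g \<alpha> \<mu> y i\<bar> \<le> \<alpha> * norm_inf (\<lambda>i. x i - y i)"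
    unfolding Tmu_def by (simp add: right_diff_distrib)
qed

lemma contr_pow:
  fixes T :: "('s::finite \<Rightarrow> real) \<Rightarrow> ('s \<Rightarrow> real)"
  assumes "\<And>x y. norm_inf (\<lambda>i. T x i - T y i) \<le> \<alpha> * norm_inf (\<lambda>i. x i - y i)" "0 \<le> \<alpha>"
  shows "norm_inf (\<lambda>i. (T^^n) x i - (T^^n) y i) \<le> \<alpha>^n * norm_inf (\<lambda>i. (x::'s::finite\<Rightarrow>real) i - y i)"
proof (induction n)
  case 0 then show ?case by (simp add: funpow_0)
next
  case (Suc n)
  have "norm_inf (\<lambda>i. (T^^Suc n) x i - (T^^Suc n) y i) \<le> \<alpha> * norm_inf (\<lambda>i. (T^^n) x i - (T^^n) y i)"
    using assms(1) by simp
  also have "\<dots> \<le> \<alpha> * (\<alpha>^n * norm_inf (\<lambda>i. x i - y i))"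
    using Suc assms(2) by (rule mult_left_mono)
  finally show ?case by (simp add: mult.assoc)
qed

lemma aux0: "(n::real) \<le> a * n \<Longrightarrow> 0 \<le> n \<Longrightarrow> a < 1 \<Longrightarrow> n = 0"
  by (smt (verit) mult_le_cancel_right1)

lemma contr_fix:
  fixes T :: "('s::finite \<Rightarrow> real) \<Rightarrow> ('s \<Rightarrow> real)"
  assumes c: "\<And>x y. norm_inf (\<lambda>i. T x i - T y i) \<le> \<alpha> * norm_inf (\<lambda>i. x i - y i)" and a: "0 \<le> \<alpha>" "\<alpha> < 1"
  shows "\<exists>!J. T J = J"
proof
  define x where "x n = (T^^n) (\<lambda>_. 0)" for n
  define D where "D = norm_inf (\<lambda>i. x 1 i - x 0 i)"
  have step: "\<bar>x (Suc n) i - x n i\<bar> \<le> \<alpha>^n * D" for n i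
  proof -
    have "\<bar>x (Suc n) i - x n i\<bar> \<le> norm_inf (\<lambda>i. x (Suc n) i - x n i)" by (rule ninf_ge)
    also have "\<dots> \<le> \<alpha>^n * D"
      using contr_pow[OF c a(1), of n "T (\<lambda>_. 0)" "\<lambda>_. 0"]
      unfolding x_def D_def by (simp add: funpow_swap1)
    finally show ?thesis .
  qed
  have conv: "\<exists>L. (\<lambda>n. x n i) \<longlonglongrightarrow> L" for i
  proof -
    have "summable (\<lambda>n. \<alpha>^n * D)" using a by (simp add: summable_mult2)
    then have "summable (\<lambda>n. x (Suc n) i - x n i)"
      by (rule summable_comparison_test'[where N=0]) (use step in auto)
    then obtain s where "(\<lambda>n. x (Suc n) i - x n i) sums s" by (auto simp: summable_def)
    then have "(\<lambda>n. \<Sum>k<n. x (Suc k) i - x k i) \<longlonglongrightarrow> s" by (simp add: sums_def)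
    then have "(\<lambda>n. x n i - x 0 i) \<longlonglongrightarrow> s" using sum_lessThan_telescope[of "\<lambda>k. x k i"] by simp
    then have "(\<lambda>n. (x n i - x 0 i) + x 0 i) \<longlonglongrightarrow> s + x 0 i" by (intro tendsto_intros)
    then show ?thesis by auto
  qed
  define L where "L i = (THE l. (\<lambda>n. x n i) \<longlonglongrightarrow> l)" for i
  have L: "(\<lambda>n. x n i) \<longlonglongrightarrow> L i" for i
    using conv[of i] unfolding L_def by (metis LIMSEQ_unique theI)
  have "(\<lambda>n. \<Sum>i\<in>UNIV. \<bar>x n i - L i\<bar>) \<longlonglongrightarrow> (\<Sum>i\<in>UNIV. \<bar>L i - L i\<bar>)"
    by (intro tendsto_intros L)
  then have s0: "(\<lambda>n. \<Sum>i\<in>UNIV. \<bar>x n i - L i\<bar>) \<longlonglongrightarrow> 0" by simp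
  have TL: "(\<lambda>n. x (Suc n) i) \<longlonglongrightarrow> T L i" for i
  proof -
    have b: "\<bar>x (Suc n) i - T L i\<bar> \<le> \<alpha> * (\<Sum>i\<in>UNIV. \<bar>x n i - L i\<bar>)" for n
    proof -
      have "\<bar>x (Suc n) i - T L i\<bar> \<le> norm_inf (\<lambda>i. T (x n) i - T L i)"
        using ninf_ge[of "\<lambda>i. T (x n) i - T L i" i] by (simp add: x_def)
      also have "\<dots> \<le> \<alpha> * norm_inf (\<lambda>i. x n i - L i)" by (rule c)
      also have "\<dots> \<le> \<alpha> * (\<Sum>i\<in>UNIV. \<bar>x n i - L i\<bar>)"
        by (intro mult_left_mono a ninf_le member_le_sum) auto
      finally show ?thesis .
    qed
    have lim: "(\<lambda>n. \<alpha> * (\<Sum>i\<in>UNIV. \<bar>x n i - L i\<bar>)) \<longlonglongrightarrow> 0"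
      using tendsto_mult_right_zero[OF s0] by simp
    have "\<forall>n. norm (x (Suc n) i - T L i) \<le> \<alpha> * (\<Sum>i\<in>UNIV. \<bar>x n i - L i\<bar>)"
      using b by simp
    from Lim_null_comparison[OF always_eventually[OF this] lim]
    have "(\<lambda>n. x (Suc n) i - T L i) \<longlonglongrightarrow> 0" .
    then show ?thesis by (simp add: LIM_zero_iff)
  qed
  show "T L = L"
  proof
    fix i
    show "T L i = L i" using TL[of i] LIMSEQ_Suc[OF L[of i]] LIMSEQ_unique by blast
  qed
  fix J assume "T J = J"
  have "norm_inf (\<lambda>i. J i - L i) \<le> \<alpha> * norm_inf (\<lambda>i. J i - L i)"
    using c[of J L] \<open>T J = J\<close> \<open>T L = L\<close> by simp
  then have "norm_inf (\<lambda>i. J i - L i) = 0"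
    using a ninf_nonneg[of "\<lambda>i. J i - L i"] aux0 by blast
  then show "J = L" by (rule ninf_zero)
qed


locale mdp =
  fixes P :: "'a::finite \<Rightarrow> 's::finite \<Rightarrow> 's \<Rightarrow> real" and g :: "'s \<Rightarrow> 'a \<Rightarrow> real" and \<alpha> :: real
  assumes P_nonneg: "\<And>a b c. P a b c \<ge> 0" and P_stoch: "\<And>a b. (\<Sum>j\<in>UNIV. P a b j) = 1"
    and a0: "0 \<le> \<alpha>" and a1: "\<alpha> < 1"
begin

abbreviation "Tb \<equiv> Tbell P g \<alpha>"
abbreviation "Js \<equiv> Jstar P g \<alpha>"

lemma Tb_contr: "norm_inf (\<lambda>i. Tb x i - Tb y i) \<le> \<alpha> * norm_inf (\<lambda>i. x i - y i)"
  by (rule Tbell_contr[OF P_nonneg P_stoch a0])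

lemma Tmu_c: "norm_inf (\<lambda>i. Tmu P g \<alpha> \<mu> x i - Tmu P g \<alpha> \<mu> y i) \<le> \<alpha> * norm_inf (\<lambda>i. x i - y i)"
  by (rule Tmu_contr[OF P_nonneg P_stoch a0])

lemma Js_fix: "Tb Js = Js"
  unfolding Jstar_def by (rule theI'[OF contr_fix[OF Tb_contr a0 a1]])

lemma Jpol_fix: "Tmu P g \<alpha> \<mu> (Jpol P g \<alpha> \<mu>) = Jpol P g \<alpha> \<mu>"
  unfolding Jpol_def by (rule theI'[OF contr_fix[OF Tmu_c a0 a1]])

lemma Tb_pow_Js: "(Tb^^n) Js = Js"
  by (induction n) (simp_all add: Js_fix)

lemma Tb_pow_contr: "norm_inf (\<lambda>i. (Tb^^n) x i - (Tb^^n) y i) \<le> \<alpha>^n * norm_inf (\<lambda>i. x i - y i)"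
  by (rule contr_pow[OF Tb_contr a0])

lemma Tb_pow_Js_dist: "norm_inf (\<lambda>i. (Tb^^n) x i - Js i) \<le> \<alpha>^n * norm_inf (\<lambda>i. x i - Js i)"
  using Tb_pow_contr[of n x Js] by (simp add: Tb_pow_Js)

lemma pol_bound:
  assumes gr: "Tmu P g \<alpha> \<mu> ((Tb ^^ (H - 1)) x) = (Tb ^^ H) x" and H: "H \<ge> 1"
  shows "norm_inf (\<lambda>i. Jpol P g \<alpha> \<mu> i - Js i) \<le> 2 * \<alpha>^H / (1 - \<alpha>) * norm_inf (\<lambda>i. x i - Js i)"
proof -
  define J where "J = Jpol P g \<alpha> \<mu>"
  define y where "y = (Tb ^^ (H - 1)) x"
  define e where "e = norm_inf (\<lambda>i. x i - Js i)"
  define A where "A = norm_inf (\<lambda>i. J i - Js i)"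
  have HH: "\<alpha> * \<alpha>^(H-1) = \<alpha>^H" using H by (cases H) auto
  have "A \<le> norm_inf (\<lambda>i. Tmu P g \<alpha> \<mu> J i - Tmu P g \<alpha> \<mu> y i) + norm_inf (\<lambda>i. Tmu P g \<alpha> \<mu> y i - Js i)"
    unfolding A_def using ninf_triangle[of J Js "Tmu P g \<alpha> \<mu> y"] Jpol_fix[of \<mu>] by (simp add: J_def)
  also have "\<dots> \<le> \<alpha> * norm_inf (\<lambda>i. J i - y i) + \<alpha>^H * e"
    using Tmu_c[of \<mu> J y] Tb_pow_Js_dist[of H x] gr by (simp add: y_def e_def)
  also have "\<alpha> * norm_inf (\<lambda>i. J i - y i) \<le> \<alpha> * (A + \<alpha>^(H-1) * e)"
  proof (rule mult_left_mono[OF _ a0])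
    show "norm_inf (\<lambda>i. J i - y i) \<le> A + \<alpha>^(H-1) * e"
      using ninf_triangle[of J y Js] Tb_pow_Js_dist[of "H-1" x] ninf_sym[of Js y]
      by (simp add: A_def y_def e_def)
  qed
  finally have "A \<le> \<alpha> * A + \<alpha>^H * e + (\<alpha> * \<alpha>^(H-1)) * e" by (simp add: algebra_simps)
  then have "A \<le> \<alpha> * A + 2 * \<alpha>^H * e" unfolding HH by (simp add: algebra_simps)
  then have "(1 - \<alpha>) * A \<le> 2 * \<alpha>^H * e" by (simp add: algebra_simps)
  then have "A \<le> 2 * \<alpha>^H * e / (1 - \<alpha>)" using a1 by (simp add: field_simps)
  then show ?thesis by (simp add: A_def J_def e_def)
qed

end


lemma rec_ev:
  fixes x a c :: "nat \<Rightarrow> real"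
  assumes rec: "\<And>k. x (Suc k) \<le> (1 - a k) * x k + a k * c k"
    and a0: "\<And>k. 0 < a k" and a1: "\<And>k. a k \<le> 1" and ns: "\<not> summable a"
    and lim: "c \<longlonglongrightarrow> c0" and e: "\<epsilon> > 0"
  shows "eventually (\<lambda>k. x k \<le> c0 + \<epsilon>) sequentially"
proof -
  have "eventually (\<lambda>k. dist (c k) c0 < \<epsilon>/2) sequentially"
    using tendsto_iff[THEN iffD1, OF lim, rule_format, of "\<epsilon>/2"] e by simp
  then obtain N where N: "\<And>k. k \<ge> N \<Longrightarrow> c k \<le> c0 + \<epsilon>/2"
    unfolding eventually_sequentially dist_real_def by (metis abs_diff_less_iff less_eq_real_def)
  define y where "y k = x k - c0 - \<epsilon>/2" for k
  have ystep: "y (Suc k) \<le> (1 - a k) * y k" if "k \<ge> N" for k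
  proof -
    have "a k * c k \<le> a k * (c0 + \<epsilon>/2)" using N[OF that] a0[of k] by (simp add: mult_left_mono)
    moreover have "(1 - a k) * (x k - c0 - \<epsilon>/2) = (1 - a k) * x k + a k * (c0 + \<epsilon>/2) - (c0 + \<epsilon>/2)"
      by (simp add: field_simps)
    ultimately show ?thesis using rec[of k] unfolding y_def by linarith
  qed
  have "\<exists>k0\<ge>N. y k0 \<le> \<epsilon>/2"
  proof (rule ccontr)
    assume "\<not> ?thesis"
    then have big: "\<And>k. k \<ge> N \<Longrightarrow> y k > \<epsilon>/2" by force
    have dec: "y (N + n) \<le> y N - \<epsilon>/2 * (\<Sum>j<n. a (j + N))" for n
    proof (induction n)
      case 0 then show ?case by simp
    next
      case (Suc n)
      have "y (N + Suc n) \<le> (1 - a (N+n)) * y (N+n)" using ystep[of "N+n"] by simp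
      also have "\<dots> = y (N+n) - a (N+n) * y (N+n)" by (simp add: algebra_simps)
      also have "\<dots> \<le> y (N+n) - a (N+n) * (\<epsilon>/2)"
        using big[of "N+n"] a0[of "N+n"] by (simp add: mult_left_mono)
      also have "\<dots> \<le> y N - \<epsilon>/2 * (\<Sum>j<n. a (j + N)) - a (N+n) * (\<epsilon>/2)" using Suc by simp
      finally show ?case by (simp add: algebra_simps)
    qed
    have "(\<Sum>j\<le>n. a (j + N)) \<le> 2 * y N / \<epsilon>" for n
    proof -
      have "y (N + Suc n) > 0" using big[of "N + Suc n"] e by simp
      then have "\<epsilon>/2 * (\<Sum>j<Suc n. a (j + N)) \<le> y N" using dec[of "Suc n"] by simp
      then have "(\<Sum>j<Suc n. a (j + N)) \<le> 2 * y N / \<epsilon>" using e by (simp add: field_simps)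
      then show ?thesis by (simp add: lessThan_Suc_atMost)
    qed
    then have "summable (\<lambda>j. a (j + N))"
      by (intro bounded_imp_summable[where B="2 * y N / \<epsilon>"]) (use a0 less_imp_le in auto)
    then have "summable a" by (simp add: summable_iff_shift)
    then show False using ns by simp
  qed
  then obtain k0 where k0: "k0 \<ge> N" "y k0 \<le> \<epsilon>/2" by blast
  have "y k \<le> \<epsilon>/2" if "k \<ge> k0" for k
    using that
  proof (induction k rule: dec_induct)
    case base then show ?case using k0 by simp
  next
    case (step k)
    have "y (Suc k) \<le> (1 - a k) * y k" using ystep[of k] step k0 by simp
    also have "\<dots> \<le> \<epsilon>/2"
    proof (cases "y k \<ge> 0")
      case True
      then have "(1 - a k) * y k \<le> y k" using a0[of k] by (simp add: algebra_simps)
      then show ?thesis using step by simp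
    next
      case False
      then have "(1 - a k) * y k \<le> 0" using a1[of k] by (simp add: mult_nonneg_nonpos)
      then show ?thesis using e by simp
    qed
    finally show ?case .
  qed
  then have "\<And>k. k \<ge> k0 \<Longrightarrow> x k \<le> c0 + \<epsilon>" unfolding y_def by fastforce
  then show ?thesis unfolding eventually_sequentially by blast
qed

lemma limsup_le_of_ev:
  fixes x :: "nat \<Rightarrow> real"
  assumes "\<And>\<epsilon>. \<epsilon> > 0 \<Longrightarrow> eventually (\<lambda>k. x k \<le> c + \<epsilon>) sequentially"
  shows "limsup (\<lambda>k. ereal (x k)) \<le> ereal c"
proof (rule ereal_le_epsilon2)
  fix \<epsilon> :: real assume "\<epsilon> > 0"
  have "eventually (\<lambda>k. ereal (x k) \<le> ereal (c + \<epsilon>)) sequentially"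
    using assms[OF \<open>\<epsilon> > 0\<close>] by eventually_elim simp
  then have "limsup (\<lambda>k. ereal (x k)) \<le> ereal (c + \<epsilon>)" by (rule Limsup_bounded)
  then show "limsup (\<lambda>k. ereal (x k)) \<le> ereal c + ereal \<epsilon>" by simp
qed


locale mart = prob_space M for M :: "'w measure" +
  fixes F :: "nat \<Rightarrow> 'w measure" and X :: "nat \<Rightarrow> 'w \<Rightarrow> real" and c :: "nat \<Rightarrow> real" and C :: real
  assumes sub: "\<And>k. subalgebra M (F k)"
    and mono: "\<And>k. sets (F k) \<subseteq> sets (F (Suc k))"
    and Xm: "\<And>k. X k \<in> borel_measurable (F (Suc k))"
    and Xb: "\<And>k \<omega>. \<omega> \<in> space M \<Longrightarrow> \<bar>X k \<omega>\<bar> \<le> C"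
    and orth: "\<And>k Y K. Y \<in> borel_measurable (F k) \<Longrightarrow> (\<And>\<omega>. \<omega> \<in> space M \<Longrightarrow> \<bar>Y \<omega>\<bar> \<le> K)
                 \<Longrightarrow> (\<integral>\<omega>. X k \<omega> * Y \<omega> \<partial>M) = 0"
    and sq: "summable (\<lambda>k. (c k)\<^sup>2)"
begin

definition "bnd f \<longleftrightarrow> (\<exists>K. \<forall>\<omega>\<in>space M. \<bar>f \<omega>\<bar> \<le> (K::real))"

lemma bndI: "(\<And>\<omega>. \<omega> \<in> space M \<Longrightarrow> \<bar>f \<omega>\<bar> \<le> K) \<Longrightarrow> bnd f"
  unfolding bnd_def by blast

lemma bnd_add: "bnd f \<Longrightarrow> bnd g \<Longrightarrow> bnd (\<lambda>\<omega>. f \<omega> + g \<omega>)"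
  unfolding bnd_def by (metis (no_types, opaque_lifting) abs_triangle_ineq add_mono order_trans)

lemma bnd_diff: "bnd f \<Longrightarrow> bnd g \<Longrightarrow> bnd (\<lambda>\<omega>. f \<omega> - g \<omega>)"
  unfolding bnd_def by (metis (no_types, opaque_lifting) abs_triangle_ineq4 add_mono order_trans)

lemma bnd_mult: "bnd f \<Longrightarrow> bnd g \<Longrightarrow> bnd (\<lambda>\<omega>. f \<omega> * g \<omega>)"
proof -
  assume "bnd f" "bnd g"
  then obtain K L where K: "\<forall>\<omega>\<in>space M. \<bar>f \<omega>\<bar> \<le> K" and L: "\<forall>\<omega>\<in>space M. \<bar>g \<omega>\<bar> \<le> L"
    unfolding bnd_def by blast
  show ?thesis
  proof (rule bndI)
    fix \<omega> assume "\<omega> \<in> space M"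
    then show "\<bar>f \<omega> * g \<omega>\<bar> \<le> K * L"
      using K L by (simp add: abs_mult mult_mono')
  qed
qed

lemma bnd_const: "bnd (\<lambda>_. a)"
  by (rule bndI[of _ "\<bar>a\<bar>"]) simp

lemma bnd_X: "bnd (X k)"
  by (rule bndI[of _ C]) (rule Xb)

lemma bnd_ind: "bnd (indicator A :: 'w \<Rightarrow> real)"
  by (rule bndI[of _ 1]) (simp add: indicator_def)

lemma bnd_int: "f \<in> borel_measurable M \<Longrightarrow> bnd f \<Longrightarrow> integrable M f"
  unfolding bnd_def by (auto intro!: integrable_const_bound AE_I2)

lemma orth': "Y \<in> borel_measurable (F k) \<Longrightarrow> bnd Y \<Longrightarrow> (\<integral>\<omega>. X k \<omega> * Y \<omega> \<partial>M) = 0"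
  unfolding bnd_def using orth by blast

lemma spaceF: "space (F k) = space M"
  using sub[of k] by (simp add: subalgebra_def)

lemma sets_mono: "m \<le> n \<Longrightarrow> sets (F m) \<subseteq> sets (F n)"
  by (rule lift_Suc_mono_le[where f="\<lambda>k. sets (F k)", OF mono])

lemma meas_lift: "f \<in> borel_measurable (F m) \<Longrightarrow> m \<le> n \<Longrightarrow> f \<in> borel_measurable (F n)"
  by (rule measurable_from_subalg[of "F n" "F m"]) (auto simp: subalgebra_def spaceF sets_mono)

lemma measM: "f \<in> borel_measurable (F m) \<Longrightarrow> f \<in> borel_measurable M"
  by (rule measurable_from_subalg[OF sub])

lemma setsM: "A \<in> sets (F m) \<Longrightarrow> A \<in> sets M"
  using sub[of m] by (auto simp: subalgebra_def)

definition "S n \<omega> = (\<Sum>k<n. c k * X k \<omega>)"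

lemma S_Suc: "S (Suc n) \<omega> = S n \<omega> + c n * X n \<omega>"
  by (simp add: S_def)

lemma S_meas: "S n \<in> borel_measurable (F n)"
proof (induction n)
  case 0 then show ?case by (simp add: S_def)
next
  case (Suc n)
  have "S n \<in> borel_measurable (F (Suc n))" using meas_lift[OF Suc] by simp
  moreover have "X n \<in> borel_measurable (F (Suc n))" by (rule Xm)
  ultimately show ?case unfolding S_Suc[abs_def] by measurable
qed

lemma S_measM: "S n \<in> borel_measurable M"
  by (rule measM[OF S_meas])

lemma bnd_S: "bnd (S n)"
proof (induction n)
  case 0 then show ?case by (simp add: S_def bnd_const)
next
  case (Suc n) then show ?case unfolding S_Suc by (intro bnd_add bnd_mult bnd_const bnd_X)
qed

lemma orthS:
  assumes mn: "m \<le> n" and Y: "Y \<in> borel_measurable (F m)" "bnd Y"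
  shows "(\<integral>\<omega>. (S n \<omega> - S m \<omega>) * Y \<omega> \<partial>M) = 0"
  using mn
proof (induction n rule: dec_induct)
  case base then show ?case by simp
next
  case (step n)
  have YM: "Y \<in> borel_measurable M" by (rule measM[OF Y(1)])
  have i1: "integrable M (\<lambda>\<omega>. (S n \<omega> - S m \<omega>) * Y \<omega>)"
    by (intro bnd_int bnd_mult bnd_diff bnd_S Y(2)) (use YM S_measM in measurable)
  have i2: "integrable M (\<lambda>\<omega>. c n * (X n \<omega> * Y \<omega>))"
    by (intro bnd_int bnd_mult bnd_const bnd_X Y(2)) (use YM measM[OF Xm] in measurable)
  have "(\<integral>\<omega>. (S (Suc n) \<omega> - S m \<omega>) * Y \<omega> \<partial>M)
      = (\<integral>\<omega>. (S n \<omega> - S m \<omega>) * Y \<omega> + c n * (X n \<omega> * Y \<omega>) \<partial>M)"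
    by (simp add: S_Suc algebra_simps)
  also have "\<dots> = (\<integral>\<omega>. (S n \<omega> - S m \<omega>) * Y \<omega> \<partial>M) + c n * (\<integral>\<omega>. X n \<omega> * Y \<omega> \<partial>M)"
    using i1 i2 by simp
  also have "(\<integral>\<omega>. X n \<omega> * Y \<omega> \<partial>M) = 0"
    by (rule orth'[OF meas_lift[OF Y(1)] Y(2)]) (use step in simp)
  finally show ?case using step by simp
qed

lemma D_meas: "j \<le> k \<Longrightarrow> m \<le> k \<Longrightarrow> (\<lambda>\<omega>. S j \<omega> - S m \<omega>) \<in> borel_measurable (F k)"
  using meas_lift[OF S_meas, of j k] meas_lift[OF S_meas, of m k] by measurable

lemma Ssq_int: "integrable M (\<lambda>\<omega>. (S n \<omega> - S m \<omega>)\<^sup>2)"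
  unfolding power2_eq_square by (intro bnd_int bnd_mult bnd_diff bnd_S) (use S_measM in measurable)

lemma second:
  assumes "m \<le> n"
  shows "(\<integral>\<omega>. (S n \<omega> - S m \<omega>)\<^sup>2 \<partial>M) \<le> C\<^sup>2 * (\<Sum>k\<in>{m..<n}. (c k)\<^sup>2)"
  using assms
proof (induction n rule: dec_induct)
  case base then show ?case by simp
next
  case (step n)
  have DM: "(\<lambda>\<omega>. S n \<omega> - S m \<omega>) \<in> borel_measurable (F n)" by (rule D_meas) (use step in auto)
  have XM: "X n \<in> borel_measurable M" by (rule measM[OF Xm])
  have i1: "integrable M (\<lambda>\<omega>. (S n \<omega> - S m \<omega>)\<^sup>2)" by (rule Ssq_int)
  have i2: "integrable M (\<lambda>\<omega>. 2 * c n * (X n \<omega> * (S n \<omega> - S m \<omega>)))"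
    by (intro bnd_int bnd_mult bnd_diff bnd_S bnd_X bnd_const) (use S_measM XM in measurable)
  have i3: "integrable M (\<lambda>\<omega>. (c n)\<^sup>2 * (X n \<omega>)\<^sup>2)"
    unfolding power2_eq_square by (intro bnd_int bnd_mult bnd_X bnd_const) (use XM in measurable)
  have i4: "integrable M (\<lambda>\<omega>. (X n \<omega>)\<^sup>2)"
    unfolding power2_eq_square by (intro bnd_int bnd_mult bnd_X) (use XM in measurable)
  have o: "(\<integral>\<omega>. X n \<omega> * (S n \<omega> - S m \<omega>) \<partial>M) = 0"
    by (rule orth'[OF DM]) (intro bnd_diff bnd_S)
  have X2: "(\<integral>\<omega>. (X n \<omega>)\<^sup>2 \<partial>M) \<le> C\<^sup>2"
  proof -
    have "(\<integral>\<omega>. (X n \<omega>)\<^sup>2 \<partial>M) \<le> (\<integral>\<omega>. C\<^sup>2 \<partial>M)"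
    proof (rule integral_mono[OF i4])
      show "integrable M (\<lambda>\<omega>. C\<^sup>2)" by simp
      fix \<omega> assume "\<omega> \<in> space M"
      then have "\<bar>X n \<omega>\<bar> \<le> C" by (rule Xb)
      then show "(X n \<omega>)\<^sup>2 \<le> C\<^sup>2" by (metis abs_ge_zero order_trans power2_abs power_mono)
    qed
    then show ?thesis by (simp add: prob_space)
  qed
  have "(\<integral>\<omega>. (S (Suc n) \<omega> - S m \<omega>)\<^sup>2 \<partial>M)
      = (\<integral>\<omega>. (S n \<omega> - S m \<omega>)\<^sup>2 + 2 * c n * (X n \<omega> * (S n \<omega> - S m \<omega>)) + (c n)\<^sup>2 * (X n \<omega>)\<^sup>2 \<partial>M)"
    by (simp add: S_Suc power2_eq_square algebra_simps)
  also have "\<dots> = (\<integral>\<omega>. (S n \<omega> - S m \<omega>)\<^sup>2 \<partial>M) + 2 * c n * (\<integral>\<omega>. X n \<omega> * (S n \<omega> - S m \<omega>) \<partial>M)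
                 + (c n)\<^sup>2 * (\<integral>\<omega>. (X n \<omega>)\<^sup>2 \<partial>M)"
    using i1 i2 i3 by simp
  also have "\<dots> \<le> C\<^sup>2 * (\<Sum>k\<in>{m..<n}. (c k)\<^sup>2) + 0 + (c n)\<^sup>2 * C\<^sup>2"
    using step.IH o X2 by (intro add_mono mult_left_mono) simp_all
  also have "\<dots> = C\<^sup>2 * (\<Sum>k\<in>{m..<Suc n}. (c k)\<^sup>2)"
    using step by (simp add: algebra_simps)
  finally show ?case .
qed

lemma maximal:
  assumes mn: "m \<le> n" and l: "l > 0"
  shows "l\<^sup>2 * prob {\<omega>\<in>space M. \<exists>k\<in>{m..n}. l \<le> \<bar>S k \<omega> - S m \<omega>\<bar>} \<le> C\<^sup>2 * (\<Sum>k\<in>{m..<n}. (c k)\<^sup>2)"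
proof -
  define D where "D k \<omega> = S k \<omega> - S m \<omega>" for k \<omega>
  define A where "A k = {\<omega>\<in>space M. l \<le> \<bar>D k \<omega>\<bar> \<and> (\<forall>j\<in>{m..<k}. \<bar>D j \<omega>\<bar> < l)}" for k
  have DF: "D j \<in> borel_measurable (F k)" if "j \<le> k" "m \<le> k" for j k
    unfolding D_def[abs_def] using D_meas[OF that] .
  have DM: "D j \<in> borel_measurable M" for j
    unfolding D_def[abs_def] using S_measM by measurable
  have AF: "A k \<in> sets (F k)" if "m \<le> k" for k
  proof -
    have e: "A k = {\<omega>\<in>space (F k). l \<le> \<bar>D k \<omega>\<bar>} \<inter> {\<omega>\<in>space (F k). \<forall>j\<in>{m..<k}. \<bar>D j \<omega>\<bar> < l}"
      unfolding A_def spaceF by blast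
    have s1: "{\<omega>\<in>space (F k). l \<le> \<bar>D k \<omega>\<bar>} \<in> sets (F k)"
      using DF[of k k] that by measurable
    have s2: "{\<omega>\<in>space (F k). \<forall>j\<in>{m..<k}. \<bar>D j \<omega>\<bar> < l} \<in> sets (F k)"
    proof (rule sets.sets_Collect_finite_All)
      fix j assume "j \<in> {m..<k}"
      then have "D j \<in> borel_measurable (F k)" using DF[of j k] that by simp
      then show "{\<omega>\<in>space (F k). \<bar>D j \<omega>\<bar> < l} \<in> sets (F k)" by measurable
    qed simp
    show ?thesis unfolding e using s1 s2 by blast
  qed
  have AM: "A k \<in> sets M" if "m \<le> k" for k using setsM[OF AF[OF that]] .
  have disj: "disjoint_family_on A {m..n}"
    unfolding disjoint_family_on_def
  proof (intro ballI impI)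
    fix i j assume "i \<in> {m..n}" "j \<in> {m..n}" "i \<noteq> j"
    show "A i \<inter> A j = {}"
    proof (cases "i < j")
      case True then show ?thesis using \<open>i \<in> {m..n}\<close> unfolding A_def by force
    next
      case False then have "j < i" using \<open>i \<noteq> j\<close> by simp
      then show ?thesis using \<open>j \<in> {m..n}\<close> unfolding A_def by force
    qed
  qed
  have Eeq: "{\<omega>\<in>space M. \<exists>k\<in>{m..n}. l \<le> \<bar>S k \<omega> - S m \<omega>\<bar>} = (\<Union>k\<in>{m..n}. A k)"
  proof (intro equalityI subsetI)
    fix \<omega> assume "\<omega> \<in> {\<omega>\<in>space M. \<exists>k\<in>{m..n}. l \<le> \<bar>S k \<omega> - S m \<omega>\<bar>}"
    then obtain k where k: "k \<in> {m..n}" "l \<le> \<bar>D k \<omega>\<bar>" and sp: "\<omega> \<in> space M" unfolding D_def by auto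
    define k0 where "k0 = (LEAST k. k \<in> {m..n} \<and> l \<le> \<bar>D k \<omega>\<bar>)"
    have k0: "k0 \<in> {m..n} \<and> l \<le> \<bar>D k0 \<omega>\<bar>" unfolding k0_def by (rule LeastI[of _ k]) (use k in simp)
    have "\<forall>j\<in>{m..<k0}. \<bar>D j \<omega>\<bar> < l"
    proof
      fix j assume j: "j \<in> {m..<k0}"
      show "\<bar>D j \<omega>\<bar> < l"
      proof (rule ccontr)
        assume "\<not> \<bar>D j \<omega>\<bar> < l"
        then have "k0 \<le> j" unfolding k0_def by (intro Least_le) (use j k0 in auto)
        then show False using j by simp
      qed
    qed
    then show "\<omega> \<in> (\<Union>k\<in>{m..n}. A k)" using k0 sp unfolding A_def by blast
  next
    fix \<omega> assume "\<omega> \<in> (\<Union>k\<in>{m..n}. A k)"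
    then show "\<omega> \<in> {\<omega>\<in>space M. \<exists>k\<in>{m..n}. l \<le> \<bar>S k \<omega> - S m \<omega>\<bar>}" unfolding A_def D_def by auto
  qed
  have key: "l\<^sup>2 * prob (A k) \<le> (\<integral>\<omega>. (D n \<omega>)\<^sup>2 * indicator (A k) \<omega> \<partial>M)" if k: "k \<in> {m..n}" for k
  proof -
    have mk: "m \<le> k" "k \<le> n" using k by auto
    note AMk[measurable] = AM[OF mk(1)]
    note SM[measurable] = S_measM
    have iA: "integrable M (\<lambda>\<omega>. l\<^sup>2 * indicator (A k) \<omega>)"
      using AM[OF mk(1)] by (intro bnd_int bnd_mult bnd_const bnd_ind) measurable
    have iK: "integrable M (\<lambda>\<omega>. (D k \<omega>)\<^sup>2 * indicator (A k) \<omega>)"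
      unfolding power2_eq_square D_def using AM[OF mk(1)] S_measM
      by (intro bnd_int bnd_mult bnd_diff bnd_S bnd_ind) measurable
    have iN: "integrable M (\<lambda>\<omega>. (D n \<omega>)\<^sup>2 * indicator (A k) \<omega>)"
      unfolding power2_eq_square D_def using AM[OF mk(1)] S_measM
      by (intro bnd_int bnd_mult bnd_diff bnd_S bnd_ind) measurable
    have i1: "integrable M (\<lambda>\<omega>. (D n \<omega> - D k \<omega>)\<^sup>2 * indicator (A k) \<omega>)"
      unfolding power2_eq_square D_def using AM[OF mk(1)] S_measM
      by (intro bnd_int bnd_mult bnd_diff bnd_S bnd_ind) measurable
    have i2: "integrable M (\<lambda>\<omega>. 2 * ((S n \<omega> - S k \<omega>) * (D k \<omega> * indicator (A k) \<omega>)))"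
      unfolding D_def using AM[OF mk(1)] S_measM
      by (intro bnd_int bnd_mult bnd_diff bnd_S bnd_ind bnd_const) measurable
    have "l\<^sup>2 * prob (A k) = (\<integral>\<omega>. l\<^sup>2 * indicator (A k) \<omega> \<partial>M)"
      using AM[OF mk(1)] by simp
    also have "\<dots> \<le> (\<integral>\<omega>. (D k \<omega>)\<^sup>2 * indicator (A k) \<omega> \<partial>M)"
    proof (rule integral_mono[OF iA iK])
      fix \<omega> assume "\<omega> \<in> space M"
      show "l\<^sup>2 * indicator (A k) \<omega> \<le> (D k \<omega>)\<^sup>2 * indicator (A k) \<omega>"
      proof (cases "\<omega> \<in> A k")
        case True
        then have "l \<le> \<bar>D k \<omega>\<bar>" unfolding A_def by simp
        then have "l\<^sup>2 \<le> \<bar>D k \<omega>\<bar>\<^sup>2" using l by (intro power_mono) auto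
        then show ?thesis using True by simp
      qed simp
    qed
    also have "\<dots> \<le> (\<integral>\<omega>. (D k \<omega>)\<^sup>2 * indicator (A k) \<omega> \<partial>M)
        + (\<integral>\<omega>. (D n \<omega> - D k \<omega>)\<^sup>2 * indicator (A k) \<omega> \<partial>M)
        + (\<integral>\<omega>. 2 * ((S n \<omega> - S k \<omega>) * (D k \<omega> * indicator (A k) \<omega>)) \<partial>M)"
    proof -
      have "0 \<le> (\<integral>\<omega>. (D n \<omega> - D k \<omega>)\<^sup>2 * indicator (A k) \<omega> \<partial>M)"
        by (rule Bochner_Integration.integral_nonneg) (simp add: indicator_def)
      moreover have "(\<integral>\<omega>. 2 * ((S n \<omega> - S k \<omega>) * (D k \<omega> * indicator (A k) \<omega>)) \<partial>M) = 0"
      proof -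
        have "(\<lambda>\<omega>. D k \<omega> * indicator (A k) \<omega>) \<in> borel_measurable (F k)"
          using DF[of k k] mk AF[OF mk(1)] by measurable
        moreover have "bnd (\<lambda>\<omega>. D k \<omega> * indicator (A k) \<omega>)"
          unfolding D_def by (intro bnd_mult bnd_diff bnd_S bnd_ind)
        ultimately have "(\<integral>\<omega>. (S n \<omega> - S k \<omega>) * (D k \<omega> * indicator (A k) \<omega>) \<partial>M) = 0"
          by (rule orthS[OF mk(2)])
        then show ?thesis by simp
      qed
      ultimately show ?thesis by simp
    qed
    also have "\<dots> = (\<integral>\<omega>. (D n \<omega>)\<^sup>2 * indicator (A k) \<omega> \<partial>M)"
    proof -
      have "(\<integral>\<omega>. (D k \<omega>)\<^sup>2 * indicator (A k) \<omega> \<partial>M)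
        + (\<integral>\<omega>. (D n \<omega> - D k \<omega>)\<^sup>2 * indicator (A k) \<omega> \<partial>M)
        + (\<integral>\<omega>. 2 * ((S n \<omega> - S k \<omega>) * (D k \<omega> * indicator (A k) \<omega>)) \<partial>M)
        = (\<integral>\<omega>. (D k \<omega>)\<^sup>2 * indicator (A k) \<omega> + (D n \<omega> - D k \<omega>)\<^sup>2 * indicator (A k) \<omega>
             + 2 * ((S n \<omega> - S k \<omega>) * (D k \<omega> * indicator (A k) \<omega>)) \<partial>M)"
        using iK i1 i2 by simp
      also have "\<dots> = (\<integral>\<omega>. (D n \<omega>)\<^sup>2 * indicator (A k) \<omega> \<partial>M)"
        by (rule Bochner_Integration.integral_cong) (auto simp: D_def power2_eq_square algebra_simps)
      finally show ?thesis .
    qed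
    finally show ?thesis .
  qed
  have "l\<^sup>2 * prob {\<omega>\<in>space M. \<exists>k\<in>{m..n}. l \<le> \<bar>S k \<omega> - S m \<omega>\<bar>} = l\<^sup>2 * (\<Sum>k\<in>{m..n}. prob (A k))"
    unfolding Eeq using AM disj by (subst finite_measure_finite_Union) auto
  also have "\<dots> = (\<Sum>k\<in>{m..n}. l\<^sup>2 * prob (A k))" by (simp add: sum_distrib_left)
  also have "\<dots> \<le> (\<Sum>k\<in>{m..n}. (\<integral>\<omega>. (D n \<omega>)\<^sup>2 * indicator (A k) \<omega> \<partial>M))"
    by (rule sum_mono) (rule key)
  also have "\<dots> = (\<integral>\<omega>. (\<Sum>k\<in>{m..n}. (D n \<omega>)\<^sup>2 * indicator (A k) \<omega>) \<partial>M)"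
  proof (rule Bochner_Integration.integral_sum[symmetric])
    fix k assume "k \<in> {m..n}"
    then have AMk[measurable]: "A k \<in> sets M" using AM by simp
    note SM[measurable] = S_measM
    show "integrable M (\<lambda>\<omega>. (D n \<omega>)\<^sup>2 * indicator (A k) \<omega>)"
      unfolding power2_eq_square D_def
      by (intro bnd_int bnd_mult bnd_diff bnd_S bnd_ind) measurable
  qed
  also have "\<dots> \<le> (\<integral>\<omega>. (D n \<omega>)\<^sup>2 \<partial>M)"
  proof (rule integral_mono)
    show "integrable M (\<lambda>\<omega>. \<Sum>k\<in>{m..n}. (D n \<omega>)\<^sup>2 * indicator (A k) \<omega>)"
    proof (rule Bochner_Integration.integrable_sum)
      fix k assume "k \<in> {m..n}"
      then have AMk[measurable]: "A k \<in> sets M" using AM by simp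
      note SM[measurable] = S_measM
      show "integrable M (\<lambda>\<omega>. (D n \<omega>)\<^sup>2 * indicator (A k) \<omega>)"
        unfolding power2_eq_square D_def
        by (intro bnd_int bnd_mult bnd_diff bnd_S bnd_ind) measurable
    qed
    show "integrable M (\<lambda>\<omega>. (D n \<omega>)\<^sup>2)" unfolding D_def by (rule Ssq_int)
    fix \<omega> assume "\<omega> \<in> space M"
    have "(\<Sum>k\<in>{m..n}. (D n \<omega>)\<^sup>2 * indicator (A k) \<omega>) = (D n \<omega>)\<^sup>2 * (\<Sum>k\<in>{m..n}. indicator (A k) \<omega>)"
      by (simp add: sum_distrib_left)
    also have "(\<Sum>k\<in>{m..n}. indicator (A k) \<omega>) = (indicator (\<Union>(A ` {m..n})) \<omega> :: real)"
      by (rule indicator_UN_disjoint[symmetric]) (use disj in auto)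
    also have "(D n \<omega>)\<^sup>2 * (indicator (\<Union>(A ` {m..n})) \<omega> :: real) \<le> (D n \<omega>)\<^sup>2"
      by (simp add: indicator_def)
    finally show "(\<Sum>k\<in>{m..n}. (D n \<omega>)\<^sup>2 * indicator (A k) \<omega>) \<le> (D n \<omega>)\<^sup>2" .
  qed
  also have "\<dots> \<le> C\<^sup>2 * (\<Sum>k\<in>{m..<n}. (c k)\<^sup>2)" unfolding D_def by (rule second[OF mn])
  finally show ?thesis .
qed

end

context mart begin

lemma tail:
  assumes l: "l > 0"
  shows "l\<^sup>2 * prob {\<omega>\<in>space M. \<exists>k\<ge>m. l \<le> \<bar>S k \<omega> - S m \<omega>\<bar>} \<le> C\<^sup>2 * (\<Sum>j. (c (j+m))\<^sup>2)"
proof -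
  note SM[measurable] = S_measM
  define B where "B n = {\<omega>\<in>space M. \<exists>k\<in>{m..m+n}. l \<le> \<bar>S k \<omega> - S m \<omega>\<bar>}" for n
  have Bs: "B n \<in> sets M" for n
    unfolding B_def by (rule sets.sets_Collect_finite_Ex) auto
  have inc: "incseq B" unfolding incseq_def B_def by force
  have U: "(\<Union>n. B n) = {\<omega>\<in>space M. \<exists>k\<ge>m. l \<le> \<bar>S k \<omega> - S m \<omega>\<bar>}"
  proof (intro equalityI subsetI)
    fix \<omega> assume "\<omega> \<in> (\<Union>n. B n)" then show "\<omega> \<in> {\<omega>\<in>space M. \<exists>k\<ge>m. l \<le> \<bar>S k \<omega> - S m \<omega>\<bar>}"
      unfolding B_def by auto
  next
    fix \<omega> assume "\<omega> \<in> {\<omega>\<in>space M. \<exists>k\<ge>m. l \<le> \<bar>S k \<omega> - S m \<omega>\<bar>}"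
    then obtain k where k: "\<omega> \<in> space M" "k \<ge> m" "l \<le> \<bar>S k \<omega> - S m \<omega>\<bar>" by auto
    then have "\<omega> \<in> B (k - m)" unfolding B_def by (intro CollectI conjI bexI[of _ k]) auto
    then show "\<omega> \<in> (\<Union>n. B n)" by blast
  qed
  have lim: "(\<lambda>n. l\<^sup>2 * prob (B n)) \<longlonglongrightarrow> l\<^sup>2 * prob (\<Union>n. B n)"
    by (intro tendsto_mult_left finite_Lim_measure_incseq inc) (use Bs in auto)
  have sm: "summable (\<lambda>j. (c (j+m))\<^sup>2)" using summable_iff_shift[of "\<lambda>k. (c k)\<^sup>2" m] sq by simp
  have "l\<^sup>2 * prob (B n) \<le> C\<^sup>2 * (\<Sum>j. (c (j+m))\<^sup>2)" for n
  proof -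
    have "l\<^sup>2 * prob (B n) \<le> C\<^sup>2 * (\<Sum>k\<in>{m..<m+n}. (c k)\<^sup>2)"
      unfolding B_def by (rule maximal) (use l in auto)
    also have "(\<Sum>k\<in>{m..<m+n}. (c k)\<^sup>2) = (\<Sum>j<n. (c (j+m))\<^sup>2)"
    proof -
      have "(\<Sum>k\<in>{m..<m+n}. (c k)\<^sup>2) = (\<Sum>k\<in>{0+m..<n+m}. (c k)\<^sup>2)" by (simp add: add.commute)
      also have "\<dots> = (\<Sum>j\<in>{0..<n}. (c (j+m))\<^sup>2)" by (rule sum.shift_bounds_nat_ivl)
      finally show ?thesis by (simp add: atLeast0LessThan)
    qed
    also have "\<dots> \<le> (\<Sum>j. (c (j+m))\<^sup>2)" by (rule sum_le_suminf[OF sm]) auto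
    finally show ?thesis by (simp add: mult_left_mono)
  qed
  then have "l\<^sup>2 * prob (\<Union>n. B n) \<le> C\<^sup>2 * (\<Sum>j. (c (j+m))\<^sup>2)"
    by (intro LIMSEQ_le_const2[OF lim]) auto
  then show ?thesis unfolding U .
qed

lemma conv: "AE \<omega> in M. convergent (\<lambda>n. S n \<omega>)"
proof -
  note SM[measurable] = S_measM
  define T where "T m = (\<Sum>j. (c (j+m))\<^sup>2)" for m
  have T0: "T \<longlonglongrightarrow> 0"
  proof -
    have "(\<lambda>m. (\<Sum>j. (c j)\<^sup>2) - (\<Sum>i<m. (c i)\<^sup>2)) \<longlonglongrightarrow> (\<Sum>j. (c j)\<^sup>2) - (\<Sum>j. (c j)\<^sup>2)"
      by (intro tendsto_intros summable_LIMSEQ sq)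
    then show ?thesis unfolding T_def using suminf_minus_initial_segment[OF sq] by simp
  qed
  define N where "N j = {\<omega>\<in>space M. \<forall>m. \<exists>k\<ge>m. 1 / real (Suc j) \<le> \<bar>S k \<omega> - S m \<omega>\<bar>}" for j
  have Ns: "N j \<in> sets M" for j unfolding N_def by measurable
  have AEj: "AE \<omega> in M. \<exists>m. \<forall>k\<ge>m. \<bar>S k \<omega> - S m \<omega>\<bar> < 1 / real (Suc j)" for j
  proof -
    define l where "l = 1 / real (Suc j)"
    have l: "l > 0" unfolding l_def by simp
    have "prob (N j) \<le> C\<^sup>2 * T m / l\<^sup>2" for m
    proof -
      have "N j \<subseteq> {\<omega>\<in>space M. \<exists>k\<ge>m. l \<le> \<bar>S k \<omega> - S m \<omega>\<bar>}" unfolding N_def l_def by auto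
      then have "prob (N j) \<le> prob {\<omega>\<in>space M. \<exists>k\<ge>m. l \<le> \<bar>S k \<omega> - S m \<omega>\<bar>}"
        by (intro finite_measure_mono) measurable
      then have "l\<^sup>2 * prob (N j) \<le> l\<^sup>2 * prob {\<omega>\<in>space M. \<exists>k\<ge>m. l \<le> \<bar>S k \<omega> - S m \<omega>\<bar>}"
        by (rule mult_left_mono) simp
      then have "l\<^sup>2 * prob (N j) \<le> C\<^sup>2 * T m"
        using tail[OF l, of m] unfolding T_def by linarith
      then show ?thesis using l by (simp add: field_simps)
    qed
    moreover have "(\<lambda>m. C\<^sup>2 * T m / l\<^sup>2) \<longlonglongrightarrow> C\<^sup>2 * 0 / l\<^sup>2" using l by (intro tendsto_intros T0) simp
    ultimately have "prob (N j) \<le> 0" by (intro LIMSEQ_le_const[of "\<lambda>m. C\<^sup>2 * T m / l\<^sup>2"]) auto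
    then have em: "emeasure M (N j) = 0" by (simp add: emeasure_eq_measure measure_nonneg antisym)
    have eqN: "{\<omega>\<in>space M. \<not> (\<exists>m. \<forall>k\<ge>m. \<bar>S k \<omega> - S m \<omega>\<bar> < 1 / real (Suc j))} = N j"
      unfolding N_def by (auto simp: not_less)
    show ?thesis using AE_iff_measurable[OF Ns eqN] em by simp
  qed
  then have "AE \<omega> in M. \<forall>j. \<exists>m. \<forall>k\<ge>m. \<bar>S k \<omega> - S m \<omega>\<bar> < 1 / real (Suc j)"
    by (simp add: AE_all_countable)
  then show ?thesis
  proof (rule AE_mp[OF _ AE_I2], intro impI)
    fix \<omega> assume H: "\<forall>j. \<exists>m. \<forall>k\<ge>m. \<bar>S k \<omega> - S m \<omega>\<bar> < 1 / real (Suc j)"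
    have "Cauchy (\<lambda>n. S n \<omega>)"
    proof (rule CauchyI)
      fix e :: real assume "e > 0"
      then obtain j where j: "inverse (real (Suc j)) < e/2" using reals_Archimedean[of "e/2"] by auto
      obtain m where m: "\<forall>k\<ge>m. \<bar>S k \<omega> - S m \<omega>\<bar> < 1 / real (Suc j)" using H by blast
      have "\<forall>p\<ge>m. \<forall>q\<ge>m. norm (S p \<omega> - S q \<omega>) < e"
      proof (intro allI impI)
        fix p q assume "p \<ge> m" "q \<ge> m"
        then have "\<bar>S p \<omega> - S m \<omega>\<bar> < e/2" "\<bar>S q \<omega> - S m \<omega>\<bar> < e/2"
          using m j by (auto simp: inverse_eq_divide)
        then show "norm (S p \<omega> - S q \<omega>) < e" by (simp add: abs_if split: if_splits)
      qed
      then show "\<exists>M. \<forall>p\<ge>M. \<forall>q\<ge>M. norm (S p \<omega> - S q \<omega>) < e" by blast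
    qed
    then show "convergent (\<lambda>n. S n \<omega>)" by (rule real_Cauchy_convergent)
  qed
qed

end


lemma cvx_abs:
  fixes a b c t :: real
  assumes "0 \<le> t" "t \<le> 1"
  shows "\<bar>(1 - t) * a + t * (b + c)\<bar> \<le> (1 - t) * \<bar>a\<bar> + t * (\<bar>b\<bar> + \<bar>c\<bar>)"
proof -
  have "\<bar>(1 - t) * a + t * (b + c)\<bar> \<le> \<bar>(1 - t) * a\<bar> + \<bar>t * (b + c)\<bar>" by (rule abs_triangle_ineq)
  also have "\<dots> = (1 - t) * \<bar>a\<bar> + t * \<bar>b + c\<bar>" using assms by (simp add: abs_mult)
  also have "\<dots> \<le> (1 - t) * \<bar>a\<bar> + t * (\<bar>b\<bar> + \<bar>c\<bar>)"
    using assms by (intro add_left_mono mult_left_mono abs_triangle_ineq) auto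
  finally show ?thesis .
qed

context mdp begin

lemma det:
  fixes x v m :: "nat \<Rightarrow> 's \<Rightarrow> real" and \<mu> :: "nat \<Rightarrow> 's \<Rightarrow> 'a" and \<gamma> :: "nat \<Rightarrow> real"
  assumes step: "\<And>k i. x (Suc k) i = (1 - \<gamma> k) * x k i + \<gamma> k * v k i"
    and greedy: "\<And>k. Tmu P g \<alpha> (\<mu> (Suc k)) ((Tb ^^ (H - 1)) (x k)) = (Tb ^^ H) (x k)"
    and bias: "\<And>k. norm_inf (\<lambda>i. m k i - (Tb ^^ (H - 1)) (x k) i)
         \<le> \<kappa> * norm_inf (\<lambda>i. (Tb ^^ (H - 1)) (x k) i - Jpol P g \<alpha> (\<mu> (Suc k)) i) + \<delta>"
    and conv: "\<And>i. convergent (\<lambda>n. \<Sum>k<n. \<gamma> k * (v k i - m k i))"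
    and step_pos: "\<And>k. 0 < \<gamma> k \<and> \<gamma> k \<le> 1"
    and step_div: "\<not> summable \<gamma>"
    and apos: "0 < \<alpha>" and H: "H \<ge> 1" and kappa_pos: "\<kappa> > 0" and delta_pos: "\<delta> > 0"
    and beta_lt1: "\<alpha> ^ (H - 1) + \<kappa> * (2 * \<alpha> ^ (H - 1) / (1 - \<alpha>)) < 1"
  shows "limsup (\<lambda>k. ereal (norm_inf (\<lambda>i. x k i - Js i)))
        \<le> ereal (\<delta> / (1 - (\<alpha> ^ (H - 1) + \<kappa> * (2 * \<alpha> ^ (H - 1) / (1 - \<alpha>)))))
    \<and> limsup (\<lambda>k. ereal (norm_inf (\<lambda>i. Jpol P g \<alpha> (\<mu> k) i - Js i)))
        \<le> ereal (2 * \<alpha> ^ (H - 1) / (1 - \<alpha>)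
                 * (\<delta> / (1 - (\<alpha> ^ (H - 1) + \<kappa> * (2 * \<alpha> ^ (H - 1) / (1 - \<alpha>))))))"
proof -
  define L where "L = 2 * \<alpha> ^ (H - 1) / (1 - \<alpha>)"
  define \<beta> where "\<beta> = \<alpha> ^ (H - 1) + \<kappa> * L"
  define D where "D = \<delta> / (1 - \<beta>)"
  define e where "e k = norm_inf (\<lambda>i. x k i - Js i)" for k
  have Lpos: "L > 0" unfolding L_def using apos a1 by simp
  have b0: "0 \<le> \<beta>" "\<beta> < 1"
  proof -
    have "0 \<le> \<alpha>^(H-1)" using apos by simp
    moreover have "0 < \<kappa> * L" using kappa_pos Lpos by simp
    ultimately show "0 \<le> \<beta>" unfolding \<beta>_def by simp
    show "\<beta> < 1" unfolding \<beta>_def L_def using beta_lt1 .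
  qed
  have aH: "\<alpha>^H \<le> \<alpha>^(H-1)" using apos a1 H by (intro power_decreasing) auto
  have Jb: "norm_inf (\<lambda>i. Jpol P g \<alpha> (\<mu> (Suc k)) i - Js i) \<le> 2 * \<alpha>^H / (1 - \<alpha>) * e k" for k
    unfolding e_def by (rule pol_bound[OF greedy H])
  have LL: "\<alpha>^(H-1) + 2 * \<alpha>^H / (1 - \<alpha>) \<le> L"
  proof -
    have "(\<alpha>^(H-1) + 2 * \<alpha>^H / (1 - \<alpha>)) * (1 - \<alpha>) = \<alpha>^(H-1) * (1 - \<alpha>) + 2 * \<alpha>^H"
      using a1 by (simp add: field_simps)
    also have "\<dots> = \<alpha>^(H-1) + \<alpha> * \<alpha>^(H-1)"
    proof -
      have HH: "\<alpha>^H = \<alpha> * \<alpha>^(H-1)" using H by (cases H) auto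
      show ?thesis unfolding HH by (simp add: algebra_simps)
    qed
    also have "\<dots> \<le> 2 * \<alpha>^(H-1)" using a1 apos by (simp add: mult_left_le_one_le)
    finally show ?thesis unfolding L_def using a1 by (simp add: field_simps)
  qed
  have mb: "norm_inf (\<lambda>i. m k i - Js i) \<le> \<beta> * e k + \<delta>" for k
  proof -
    define y where "y = (Tb ^^ (H - 1)) (x k)"
    define J where "J = Jpol P g \<alpha> (\<mu> (Suc k))"
    have yJs: "norm_inf (\<lambda>i. y i - Js i) \<le> \<alpha>^(H-1) * e k"
      unfolding y_def e_def by (rule Tb_pow_Js_dist)
    have "norm_inf (\<lambda>i. y i - J i) \<le> norm_inf (\<lambda>i. y i - Js i) + norm_inf (\<lambda>i. Js i - J i)"
      by (rule ninf_triangle)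
    also have "\<dots> \<le> \<alpha>^(H-1) * e k + 2 * \<alpha>^H / (1 - \<alpha>) * e k"
      using yJs Jb[of k] ninf_sym[of Js J] by (simp add: J_def)
    also have "\<dots> = (\<alpha>^(H-1) + 2 * \<alpha>^H / (1 - \<alpha>)) * e k" by (simp add: algebra_simps)
    also have "\<dots> \<le> L * e k" using LL by (rule mult_right_mono) (simp add: e_def ninf_nonneg)
    finally have yJ: "norm_inf (\<lambda>i. y i - J i) \<le> L * e k" .
    have "norm_inf (\<lambda>i. m k i - Js i) \<le> norm_inf (\<lambda>i. m k i - y i) + norm_inf (\<lambda>i. y i - Js i)"
      by (rule ninf_triangle)
    also have "\<dots> \<le> (\<kappa> * (L * e k) + \<delta>) + \<alpha>^(H-1) * e k"
    proof -
      have "\<kappa> * norm_inf (\<lambda>i. y i - J i) \<le> \<kappa> * (L * e k)"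
        using yJ kappa_pos by (simp add: mult_left_mono)
      then show ?thesis using bias[of k] yJs unfolding y_def J_def by linarith
    qed
    also have "\<dots> = \<beta> * e k + \<delta>" by (simp add: \<beta>_def algebra_simps)
    finally show ?thesis .
  qed
  define S where "S n i = (\<Sum>k<n. \<gamma> k * (v k i - m k i))" for n i
  define Sinf where "Sinf i = lim (\<lambda>n. S n i)" for i
  define Tt where "Tt k i = Sinf i - S k i" for k i
  define nT where "nT k = norm_inf (Tt k)" for k
  have Tt0: "(\<lambda>k. Tt k i) \<longlonglongrightarrow> 0" for i
  proof -
    have "(\<lambda>n. S n i) \<longlonglongrightarrow> Sinf i" unfolding Sinf_def S_def using conv[of i] by (simp add: convergent_LIMSEQ_iff)
    then have "(\<lambda>k. Sinf i - S k i) \<longlonglongrightarrow> Sinf i - Sinf i" by (intro tendsto_intros)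
    then show ?thesis by (simp add: Tt_def)
  qed
  have nT0: "nT \<longlonglongrightarrow> 0"
  proof -
    have "(\<lambda>k. \<Sum>i\<in>UNIV. \<bar>Tt k i\<bar>) \<longlonglongrightarrow> (\<Sum>i\<in>(UNIV::'s set). 0)" by (intro tendsto_sum tendsto_rabs_zero Tt0)
    then have s: "(\<lambda>k. \<Sum>i\<in>UNIV. \<bar>Tt k i\<bar>) \<longlonglongrightarrow> 0" by simp
    have "\<forall>k. norm (nT k) \<le> (\<Sum>i\<in>UNIV. \<bar>Tt k i\<bar>)"
    proof
      fix k
      have "norm_inf (Tt k) \<le> (\<Sum>i\<in>UNIV. \<bar>Tt k i\<bar>)"
        by (rule ninf_le) (rule member_le_sum[of _ UNIV "\<lambda>i. \<bar>Tt k i\<bar>"], auto)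
      then show "norm (nT k) \<le> (\<Sum>i\<in>UNIV. \<bar>Tt k i\<bar>)"
        unfolding nT_def using ninf_nonneg[of "Tt k"] by simp
    qed
    from Lim_null_comparison[OF always_eventually[OF this] s] show ?thesis .
  qed
  have nTn: "0 \<le> nT k" for k unfolding nT_def by (rule ninf_nonneg)
  define z where "z k i = x k i - Js i + Tt k i" for k i
  define nz where "nz k = norm_inf (z k)" for k
  have TtS: "Tt (Suc k) i = Tt k i - \<gamma> k * (v k i - m k i)" for k i
    by (simp add: Tt_def S_def)
  have zS: "z (Suc k) i = (1 - \<gamma> k) * z k i + \<gamma> k * (m k i - Js i + Tt k i)" for k i
    unfolding z_def TtS step by (simp add: algebra_simps)
  have ez: "e k \<le> nz k + nT k" for k
  proof -
    have "e k = norm_inf (\<lambda>i. z k i - Tt k i)" by (simp add: e_def z_def)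
    also have "\<dots> \<le> norm_inf (\<lambda>i. z k i - 0) + norm_inf (\<lambda>i. 0 - Tt k i)" by (rule ninf_triangle)
    also have "\<dots> = nz k + nT k" unfolding nz_def nT_def norm_inf_def by simp
    finally show ?thesis .
  qed
  have nzrec: "nz (Suc k) \<le> (1 - \<gamma> k * (1 - \<beta>)) * nz k + \<gamma> k * (1 - \<beta>) * (((1 + \<beta>) * nT k + \<delta>) / (1 - \<beta>))" for k
  proof -
    have g: "0 < \<gamma> k" "\<gamma> k \<le> 1" using step_pos[of k] by auto
    have "nz (Suc k) \<le> (1 - \<gamma> k) * nz k + \<gamma> k * (norm_inf (\<lambda>i. m k i - Js i) + nT k)"
    proof (unfold nz_def, rule ninf_le)
      fix i
      have "\<bar>z (Suc k) i\<bar> \<le> (1 - \<gamma> k) * \<bar>z k i\<bar> + \<gamma> k * (\<bar>m k i - Js i\<bar> + \<bar>Tt k i\<bar>)"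
        unfolding zS using g by (intro cvx_abs) auto
      also have "\<dots> \<le> (1 - \<gamma> k) * norm_inf (z k) + \<gamma> k * (norm_inf (\<lambda>i. m k i - Js i) + norm_inf (Tt k))"
        using g ninf_ge[of "z k" i] ninf_ge[of "\<lambda>i. m k i - Js i" i] ninf_ge[of "Tt k" i]
        by (intro add_mono mult_left_mono) auto
      finally show "\<bar>z (Suc k) i\<bar> \<le> (1 - \<gamma> k) * norm_inf (z k) + \<gamma> k * (norm_inf (\<lambda>i. m k i - Js i) + nT k)"
        by (simp add: nT_def)
    qed
    also have "\<dots> \<le> (1 - \<gamma> k) * nz k + \<gamma> k * (\<beta> * (nz k + nT k) + \<delta> + nT k)"
    proof -
      have "norm_inf (\<lambda>i. m k i - Js i) \<le> \<beta> * (nz k + nT k) + \<delta>"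
      proof -
        have "\<beta> * e k \<le> \<beta> * (nz k + nT k)" using ez[of k] b0 by (simp add: mult_left_mono)
        then show ?thesis using mb[of k] by linarith
      qed
      then show ?thesis using g by (simp add: mult_left_mono)
    qed
    also have "\<dots> = (1 - \<gamma> k * (1 - \<beta>)) * nz k + \<gamma> k * (1 - \<beta>) * (((1 + \<beta>) * nT k + \<delta>) / (1 - \<beta>))"
      using b0 by (simp add: field_simps)
    finally show ?thesis .
  qed
  have ns: "\<not> summable (\<lambda>k. \<gamma> k * (1 - \<beta>))"
  proof
    assume "summable (\<lambda>k. \<gamma> k * (1 - \<beta>))"
    then have "summable (\<lambda>k. (1 - \<beta>) * \<gamma> k)" by (simp add: mult.commute)
    then show False using step_div b0 by simp
  qed
  have climit: "(\<lambda>k. ((1 + \<beta>) * nT k + \<delta>) / (1 - \<beta>)) \<longlonglongrightarrow> ((1 + \<beta>) * 0 + \<delta>) / (1 - \<beta>)"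
    by (intro tendsto_intros nT0) (use b0 in simp)
  have evz: "eventually (\<lambda>k. nz k \<le> D + \<epsilon>) sequentially" if "\<epsilon> > 0" for \<epsilon>
    using rec_ev[of nz "\<lambda>k. \<gamma> k * (1 - \<beta>)", OF nzrec _ _ ns climit that] step_pos b0
    unfolding D_def by (simp add: mult_le_one)
  have eve: "eventually (\<lambda>k. e k \<le> D + \<epsilon>) sequentially" if "\<epsilon> > 0" for \<epsilon>
  proof -
    have "eventually (\<lambda>k. nz k \<le> D + \<epsilon>/2) sequentially" using evz that by simp
    moreover have "eventually (\<lambda>k. dist (nT k) 0 < \<epsilon>/2) sequentially"
      using tendsto_iff[THEN iffD1, OF nT0, rule_format, of "\<epsilon>/2"] that by simp
    ultimately show ?thesis
    proof eventually_elim
      case (elim k) then show ?case using ez[of k] nTn[of k] by simp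
    qed
  qed
  have conc1: "limsup (\<lambda>k. ereal (e k)) \<le> ereal D" by (rule limsup_le_of_ev[OF eve])
  have evJ: "eventually (\<lambda>k. norm_inf (\<lambda>i. Jpol P g \<alpha> (\<mu> k) i - Js i) \<le> L * D + \<epsilon>) sequentially"
    if "\<epsilon> > 0" for \<epsilon>
  proof -
    have "eventually (\<lambda>k. e k \<le> D + \<epsilon> / L) sequentially" using eve Lpos that by simp
    then have "eventually (\<lambda>k. norm_inf (\<lambda>i. Jpol P g \<alpha> (\<mu> (Suc k)) i - Js i) \<le> L * D + \<epsilon>) sequentially"
    proof eventually_elim
      case (elim k)
      have "norm_inf (\<lambda>i. Jpol P g \<alpha> (\<mu> (Suc k)) i - Js i) \<le> 2 * \<alpha>^H / (1 - \<alpha>) * e k" by (rule Jb)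
      also have "\<dots> \<le> L * e k"
        using aH a1 by (intro mult_right_mono) (auto simp: L_def e_def ninf_nonneg divide_right_mono)
      also have "\<dots> \<le> L * (D + \<epsilon> / L)" using elim Lpos by (simp add: mult_left_mono)
      also have "\<dots> = L * D + \<epsilon>" using Lpos by (simp add: field_simps)
      finally show ?case .
    qed
    then show ?thesis by (subst eventually_sequentially_Suc[symmetric])
  qed
  have conc2: "limsup (\<lambda>k. ereal (norm_inf (\<lambda>i. Jpol P g \<alpha> (\<mu> k) i - Js i))) \<le> ereal (L * D)"
    by (rule limsup_le_of_ev[OF evJ])
  show ?thesis using conc1 conc2 unfolding e_def D_def \<beta>_def L_def by simp
qed

end


theorem theorem2:
  fixes P :: "'a::finite \<Rightarrow> 's::finite \<Rightarrow> 's \<Rightarrow> real"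
    and g :: "'s \<Rightarrow> 'a \<Rightarrow> real"
    and \<alpha> :: real
    and \<phi> :: "'s \<Rightarrow> real ^ 'd"
    and H :: nat
    and \<theta>0 :: "real ^ 'd"
    and \<gamma> :: "nat \<Rightarrow> real"
    and M :: "'w measure"
    and F :: "nat \<Rightarrow> 'w measure"
    and \<theta> :: "nat \<Rightarrow> 'w \<Rightarrow> real ^ 'd"
    and \<mu> :: "nat \<Rightarrow> 'w \<Rightarrow> ('s \<Rightarrow> 'a)"
    and \<theta>hat :: "nat \<Rightarrow> 'w \<Rightarrow> real ^ 'd"
    and \<delta> \<kappa> :: real
  assumes P_nonneg: "\<And>u i j. P u i j \<ge> 0"
    and P_stoch: "\<And>u i. (\<Sum>j\<in>UNIV. P u i j) = 1"
    and g_bounds: "\<And>i u. 0 \<le> g i u \<and> g i u \<le> 1"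
    and alpha: "0 < \<alpha>" "\<alpha> < 1"
    and H: "H \<ge> 1"
    and step_pos: "\<And>k. 0 < \<gamma> k \<and> \<gamma> k \<le> 1"
    and step_div: "\<not> summable \<gamma>"
    and step_sq: "summable (\<lambda>k. (\<gamma> k)\<^sup>2)"
    and prob: "prob_space M"
    and filt_sub: "\<And>k. subalgebra M (F k)"
    and filt_mono: "\<And>k. sets (F k) \<subseteq> sets (F (Suc k))"
    and theta_init: "\<And>\<omega>. \<theta> 0 \<omega> = \<theta>0"
    and greedy: "\<And>k \<omega>. Tmu P g \<alpha> (\<mu> (Suc k) \<omega>) ((Tbell P g \<alpha> ^^ (H - 1)) (featmul \<phi> (\<theta> k \<omega>)))
                       = (Tbell P g \<alpha> ^^ H) (featmul \<phi> (\<theta> k \<omega>))"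
    and theta_step: "\<And>k \<omega>. \<theta> (Suc k) \<omega> = (1 - \<gamma> k) *\<^sub>R \<theta> k \<omega> + \<gamma> k *\<^sub>R \<theta>hat k \<omega>"
    and theta_meas: "\<And>k. \<theta> k \<in> borel_measurable (F k)"
    and mu_meas: "\<And>k. \<mu> (Suc k) \<in> measurable (F k) (count_space UNIV)"
    and thetahat_meas: "\<And>k. \<theta>hat k \<in> borel_measurable (F (Suc k))"
    and thetahat_bdd: "\<exists>B. \<forall>k. AE \<omega> in M. norm_inf (featmul \<phi> (\<theta>hat k \<omega>)) \<le> B"
    and delta_pos: "\<delta> > 0"
    and kappa_pos: "\<kappa> > 0"
    and beta_lt1: "\<alpha> ^ (H - 1) + \<kappa> * (2 * \<alpha> ^ (H - 1) / (1 - \<alpha>)) < 1"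
    and bias: "\<And>k. AE \<omega> in M.
         norm_inf (\<lambda>i. real_cond_exp M (F k) (\<lambda>\<omega>'. featmul \<phi> (\<theta>hat k \<omega>') i) \<omega>
                       - (Tbell P g \<alpha> ^^ (H - 1)) (featmul \<phi> (\<theta> k \<omega>)) i)
         \<le> \<kappa> * norm_inf (\<lambda>i. (Tbell P g \<alpha> ^^ (H - 1)) (featmul \<phi> (\<theta> k \<omega>)) i
                               - Jpol P g \<alpha> (\<mu> (Suc k) \<omega>) i) + \<delta>"
  shows "AE \<omega> in M.
      limsup (\<lambda>k. ereal (norm_inf (\<lambda>i. featmul \<phi> (\<theta> k \<omega>) i - Jstar P g \<alpha> i)))
        \<le> ereal (\<delta> / (1 - (\<alpha> ^ (H - 1) + \<kappa> * (2 * \<alpha> ^ (H - 1) / (1 - \<alpha>)))))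
    \<and> limsup (\<lambda>k. ereal (norm_inf (\<lambda>i. Jpol P g \<alpha> (\<mu> k \<omega>) i - Jstar P g \<alpha> i)))
        \<le> ereal (2 * \<alpha> ^ (H - 1) / (1 - \<alpha>)
                 * (\<delta> / (1 - (\<alpha> ^ (H - 1) + \<kappa> * (2 * \<alpha> ^ (H - 1) / (1 - \<alpha>))))))"
proof -
  interpret prob_space M by (rule prob)
  interpret mdp P g \<alpha> using P_nonneg P_stoch alpha by unfold_locales auto
  obtain B where Bb: "\<And>k. AE \<omega> in M. norm_inf (featmul \<phi> (\<theta>hat k \<omega>)) \<le> B" using thetahat_bdd by blast
  define f where "f k i \<omega> = featmul \<phi> (\<theta>hat k \<omega>) i" for k i \<omega>
  define E where "E k i \<omega> = real_cond_exp M (F k) (\<lambda>\<omega>'. featmul \<phi> (\<theta>hat k \<omega>') i) \<omega>" for k i \<omega>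
  define w where "w k i \<omega> = f k i \<omega> - E k i \<omega>" for k i \<omega>
  define X where "X i k \<omega> = max (-(2*B)) (min (2*B) (w k i \<omega>))" for i k \<omega>
  have spF: "space (F k) = space M" for k using filt_sub[of k] by (simp add: subalgebra_def)
  have subS: "subalgebra (F (Suc k)) (F k)" for k
    using filt_mono[of k] by (simp add: subalgebra_def spF)
  have sfs: "sigma_finite_subalgebra M (F k)" for k
    by (rule finite_measure_subalgebra_is_sigma_finite) (unfold_locales, rule filt_sub)
  have fF: "f k i \<in> borel_measurable (F (Suc k))" for k i
  proof -
    note thetahat_meas[measurable]
    show ?thesis unfolding f_def[abs_def] featmul_def by measurable
  qed
  have fM: "f k i \<in> borel_measurable M" for k i by (rule measurable_from_subalg[OF filt_sub fF])
  have fb: "AE \<omega> in M. \<bar>f k i \<omega>\<bar> \<le> B" for k i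
    using Bb[of k]
  proof eventually_elim
    case (elim \<omega>)
    then show ?case using ninf_ge[of "featmul \<phi> (\<theta>hat k \<omega>)" i] by (simp add: f_def)
  qed
  have fint: "integrable M (f k i)" for k i
    by (rule integrable_const_bound[OF _ fM]) (use fb in simp)
  have Eeq: "E k i = real_cond_exp M (F k) (f k i)" for k i unfolding E_def[abs_def] f_def[abs_def] by simp
  have EF: "E k i \<in> borel_measurable (F k)" for k i unfolding Eeq by simp
  have EF': "E k i \<in> borel_measurable (F (Suc k))" for k i by (rule measurable_from_subalg[OF subS EF])
  have Eb: "AE \<omega> in M. \<bar>E k i \<omega>\<bar> \<le> B" for k i
  proof -
    have "AE \<omega> in M. f k i \<omega> \<le> B" using fb[of k i] by eventually_elim auto
    then have 1: "AE \<omega> in M. E k i \<omega> \<le> B"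
      unfolding Eeq by (rule sigma_finite_subalgebra.real_cond_exp_le_c[OF sfs fint])
    have "AE \<omega> in M. f k i \<omega> \<ge> -B" using fb[of k i] by eventually_elim auto
    then have 2: "AE \<omega> in M. E k i \<omega> \<ge> -B"
      unfolding Eeq by (rule sigma_finite_subalgebra.real_cond_exp_ge_c[OF sfs fint])
    from 1 2 show ?thesis by eventually_elim auto
  qed
  have XW: "AE \<omega> in M. X i k \<omega> = w k i \<omega>" for k i
    using fb[of k i] Eb[of k i] by eventually_elim (auto simp: X_def w_def)
  have XF: "X i k \<in> borel_measurable (F (Suc k))" for k i
    using fF[of k i] EF'[of k i] unfolding X_def[abs_def] w_def[abs_def] by measurable
  have Xbd: "\<bar>X i k \<omega>\<bar> \<le> \<bar>2*B\<bar>" for k i \<omega>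
    unfolding X_def by (auto simp: max_def min_def abs_if)
  have orth: "(\<integral>\<omega>. X i k \<omega> * Y \<omega> \<partial>M) = 0"
    if Y: "Y \<in> borel_measurable (F k)" and YK: "\<And>\<omega>. \<omega> \<in> space M \<Longrightarrow> \<bar>Y \<omega>\<bar> \<le> K" for k i Y K
  proof -
    have YM: "Y \<in> borel_measurable M" by (rule measurable_from_subalg[OF filt_sub Y])
    have XM: "X i k \<in> borel_measurable M" by (rule measurable_from_subalg[OF filt_sub XF])
    have EM: "E k i \<in> borel_measurable M" by (rule measurable_from_subalg[OF filt_sub EF])
    have iYf: "integrable M (\<lambda>\<omega>. Y \<omega> * f k i \<omega>)"
    proof (rule integrable_const_bound[where B="K * B"])
      show "AE \<omega> in M. norm (Y \<omega> * f k i \<omega>) \<le> K * B"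
        using fb[of k i] AE_space
      proof eventually_elim
        case (elim \<omega>)
        then have "\<bar>Y \<omega>\<bar> \<le> K" by (intro YK) auto
        then show ?case using elim by (simp add: abs_mult mult_mono')
      qed
      show "(\<lambda>\<omega>. Y \<omega> * f k i \<omega>) \<in> borel_measurable M" using YM fM by measurable
    qed
    note ce = sigma_finite_subalgebra.real_cond_exp_intg[OF sfs iYf Y fM]
    have "(\<integral>\<omega>. X i k \<omega> * Y \<omega> \<partial>M) = (\<integral>\<omega>. Y \<omega> * f k i \<omega> - Y \<omega> * E k i \<omega> \<partial>M)"
    proof (rule integral_cong_AE)
      show "(\<lambda>\<omega>. X i k \<omega> * Y \<omega>) \<in> borel_measurable M" using XM YM by measurable
      show "(\<lambda>\<omega>. Y \<omega> * f k i \<omega> - Y \<omega> * E k i \<omega>) \<in> borel_measurable M" using YM fM EM by measurable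
      show "AE \<omega> in M. X i k \<omega> * Y \<omega> = Y \<omega> * f k i \<omega> - Y \<omega> * E k i \<omega>"
        using XW[of i k] by eventually_elim (simp add: w_def right_diff_distrib mult.commute)
    qed
    also have "\<dots> = (\<integral>\<omega>. Y \<omega> * f k i \<omega> \<partial>M) - (\<integral>\<omega>. Y \<omega> * E k i \<omega> \<partial>M)"
      using iYf ce(1) unfolding Eeq by (intro Bochner_Integration.integral_diff)
    also have "\<dots> = 0" using ce(2) unfolding Eeq by simp
    finally show ?thesis .
  qed
  have convi: "AE \<omega> in M. convergent (\<lambda>n. \<Sum>k<n. \<gamma> k * X i k \<omega>)" for i
  proof -
    interpret mart M F "X i" \<gamma> "\<bar>2*B\<bar>"
    proof unfold_locales
      show "\<And>k. subalgebra M (F k)" by (rule filt_sub)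
      show "\<And>k. sets (F k) \<subseteq> sets (F (Suc k))" by (rule filt_mono)
      show "\<And>k. X i k \<in> borel_measurable (F (Suc k))" by (rule XF)
      show "\<And>k \<omega>. \<omega> \<in> space M \<Longrightarrow> \<bar>X i k \<omega>\<bar> \<le> \<bar>2*B\<bar>" by (rule Xbd)
      show "\<And>k Y K. Y \<in> borel_measurable (F k) \<Longrightarrow> (\<And>\<omega>. \<omega> \<in> space M \<Longrightarrow> \<bar>Y \<omega>\<bar> \<le> K)
                 \<Longrightarrow> (\<integral>\<omega>. X i k \<omega> * Y \<omega> \<partial>M) = 0" by (rule orth)
      show "summable (\<lambda>k. (\<gamma> k)\<^sup>2)" by (rule step_sq)
    qed
    show ?thesis using conv unfolding S_def .
  qed
  have A1: "AE \<omega> in M. \<forall>i. convergent (\<lambda>n. \<Sum>k<n. \<gamma> k * X i k \<omega>)"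
    using convi by (simp add: AE_all_countable)
  have A2: "AE \<omega> in M. \<forall>k i. X i k \<omega> = w k i \<omega>"
    using XW by (simp add: AE_all_countable)
  have A3: "AE \<omega> in M. \<forall>k. norm_inf (\<lambda>i. real_cond_exp M (F k) (\<lambda>\<omega>'. featmul \<phi> (\<theta>hat k \<omega>') i) \<omega>
                       - (Tbell P g \<alpha> ^^ (H - 1)) (featmul \<phi> (\<theta> k \<omega>)) i)
         \<le> \<kappa> * norm_inf (\<lambda>i. (Tbell P g \<alpha> ^^ (H - 1)) (featmul \<phi> (\<theta> k \<omega>)) i
                               - Jpol P g \<alpha> (\<mu> (Suc k) \<omega>) i) + \<delta>"
    using bias by (simp add: AE_all_countable)
  from A1 A2 A3 show ?thesis
  proof eventually_elim
    case (elim \<omega>)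
    show ?case
    proof (rule det[where x="\<lambda>k. featmul \<phi> (\<theta> k \<omega>)" and v="\<lambda>k. featmul \<phi> (\<theta>hat k \<omega>)"
          and m="\<lambda>k i. real_cond_exp M (F k) (\<lambda>\<omega>'. featmul \<phi> (\<theta>hat k \<omega>') i) \<omega>"
          and \<mu>="\<lambda>k. \<mu> k \<omega>" and \<gamma>=\<gamma>])
      show "\<And>k i. featmul \<phi> (\<theta> (Suc k) \<omega>) i = (1 - \<gamma> k) * featmul \<phi> (\<theta> k \<omega>) i + \<gamma> k * featmul \<phi> (\<theta>hat k \<omega>) i"
        by (simp add: featmul_def theta_step inner_add_right)
      show "\<And>k. Tmu P g \<alpha> (\<mu> (Suc k) \<omega>) ((Tb ^^ (H - 1)) (featmul \<phi> (\<theta> k \<omega>))) = (Tb ^^ H) (featmul \<phi> (\<theta> k \<omega>))"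
        by (rule greedy)
      show "\<And>k. norm_inf (\<lambda>i. real_cond_exp M (F k) (\<lambda>\<omega>'. featmul \<phi> (\<theta>hat k \<omega>') i) \<omega> - (Tb ^^ (H - 1)) (featmul \<phi> (\<theta> k \<omega>)) i)
         \<le> \<kappa> * norm_inf (\<lambda>i. (Tb ^^ (H - 1)) (featmul \<phi> (\<theta> k \<omega>)) i - Jpol P g \<alpha> (\<mu> (Suc k) \<omega>) i) + \<delta>"
        using elim(3) by blast
      fix i
      have "(\<lambda>n. \<Sum>k<n. \<gamma> k * X i k \<omega>) = (\<lambda>n. \<Sum>k<n. \<gamma> k * (featmul \<phi> (\<theta>hat k \<omega>) i - real_cond_exp M (F k) (\<lambda>\<omega>'. featmul \<phi> (\<theta>hat k \<omega>') i) \<omega>))"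
        using elim(2) by (simp add: w_def f_def E_def)
      then show "convergent (\<lambda>n. \<Sum>k<n. \<gamma> k * (featmul \<phi> (\<theta>hat k \<omega>) i - real_cond_exp M (F k) (\<lambda>\<omega>'. featmul \<phi> (\<theta>hat k \<omega>') i) \<omega>))"
        using elim(1) by metis
    qed (use step_pos step_div alpha H kappa_pos delta_pos beta_lt1 in auto)
  qed
qed


end
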